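(* Let $J\subseteq\mathbb{R}$ be an interval, $f:J\to\mathbb{R}$ convex, $a,b\in J$, $\nu\in[0,1]$, $r=\min\{\nu,1-\nu\}$, $R=\max\{\nu,1-\nu\}$, and $$\Phi_f(\nu):=\int_0^1\left(\frac{f\big(a\nabla_{\nu\lambda}b\big)+f\big(b\nabla_{(1-\nu)\lambda}a\big)}{2}-f\Big(a\nabla_{\frac{1+\lambda(2\nu-1)}{2}}b\Big)\right)d\lambda,\qquad \Delta_f:=\frac{f(a)+f(b)}{2}-f\Big(\frac{a+b}{2}\Big).$$ Then $$2\big(r\,\Phi_f(\nu)+\widetilde r(\nu)\,\Delta_f\big)\le f(a)\nabla_\nu f(b)-f\big(a\nabla_\nu b\big)\le 2\big(R\,\Phi_f(\nu)+\widetilde R(\nu)\,\Delta_f\big).$$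
   Context: For real $x,y$ and $\mu\in[0,1]$, $x\nabla_\mu y:=(1-\mu)x+\mu y$. For $\lambda\in[0,1]$ let $r_1(\lambda)=\min\{\nu\lambda,1-\nu\lambda\}$, $r_2(\lambda)=\min\{(1-\nu)\lambda,1-(1-\nu)\lambda\}$, $R_1(\lambda)=\max\{\nu\lambda,1-\nu\lambda\}$, $R_2(\lambda)=\max\{(1-\nu)\lambda,1-(1-\nu)\lambda\}$, and $\widetilde r(\nu):=\int_0^1((1-\nu)r_1(\lambda)+\nu r_2(\lambda))d\lambda$, $\widetilde R(\nu):=\int_0^1((1-\nu)R_1(\lambda)+\nu R_2(\lambda))d\lambda$. *)

theory Defs
  imports "HOL-Analysis.Analysis"
begin

definition nabla :: "real \<Rightarrow> real \<Rightarrow> real \<Rightarrow> real" where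
  "nabla x \<mu> y = (1 - \<mu>) * x + \<mu> * y"

definition r1 :: "real \<Rightarrow> real \<Rightarrow> real" where
  "r1 \<nu> t = min (\<nu> * t) (1 - \<nu> * t)"
definition r2 :: "real \<Rightarrow> real \<Rightarrow> real" where
  "r2 \<nu> t = min ((1 - \<nu>) * t) (1 - (1 - \<nu>) * t)"
definition R1 :: "real \<Rightarrow> real \<Rightarrow> real" where
  "R1 \<nu> t = max (\<nu> * t) (1 - \<nu> * t)"
definition R2 :: "real \<Rightarrow> real \<Rightarrow> real" where
  "R2 \<nu> t = max ((1 - \<nu>) * t) (1 - (1 - \<nu>) * t)"

definition r_tilde :: "real \<Rightarrow> real" where
  "r_tilde \<nu> = integral {0..1} (\<lambda>t. (1 - \<nu>) * r1 \<nu> t + \<nu> * r2 \<nu> t)"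
definition R_tilde :: "real \<Rightarrow> real" where
  "R_tilde \<nu> = integral {0..1} (\<lambda>t. (1 - \<nu>) * R1 \<nu> t + \<nu> * R2 \<nu> t)"

definition Phi :: "(real \<Rightarrow> real) \<Rightarrow> real \<Rightarrow> real \<Rightarrow> real \<Rightarrow> real" where
  "Phi f a b \<nu> = integral {0..1} (\<lambda>t.
      (f (nabla a (\<nu> * t) b) + f (nabla b ((1 - \<nu>) * t) a)) / 2
      - f (nabla a ((1 + t * (2 * \<nu> - 1)) / 2) b))"

definition Delta :: "(real \<Rightarrow> real) \<Rightarrow> real \<Rightarrow> real \<Rightarrow> real" where
  "Delta f a b = (f a + f b) / 2 - f ((a + b) / 2)"

end

theory Submission
  imports Defs
begin

lemma conv1:
  fixes f :: "real \<Rightarrow> real"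
  assumes "convex_on S f" "x \<in> S" "y \<in> S" "0 \<le> t" "t \<le> 1"
  shows "f ((1-t)*x + t*y) \<le> (1-t)*f x + t*f y"
  using convex_onD[OF assms(1) assms(4,5,2,3)] by simp

lemma convpt:
  fixes f :: "real \<Rightarrow> real"
  assumes "convex_on S f" "x \<in> S" "y \<in> S" "0 \<le> t" "t \<le> 1"
  shows "(1-t)*x + t*y \<in> S"
proof -
  have "convex S" using assms(1) by (simp add: convex_on_def)
  then show ?thesis using convexD[of S x y "1-t" t] assms by simp
qed

lemma refine_half:
  fixes f :: "real \<Rightarrow> real"
  assumes "convex_on S f" "x \<in> S" "y \<in> S" "0 \<le> t" "t \<le> 1/2"
  shows "2*t*((f x + f y)/2 - f((x+y)/2)) \<le> (1-t)*f x + t*f y - f((1-t)*x+t*y)"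
    and "(1-t)*f x + t*f y - f((1-t)*x+t*y) \<le> 2*(1-t)*((f x + f y)/2 - f((x+y)/2))"
proof -
  have mS: "(x+y)/2 \<in> S" using convpt[OF assms(1-3), of "1/2"] by (simp add: field_simps)
  have pS: "(1-t)*x+t*y \<in> S" using convpt[OF assms(1-3), of t] assms by simp
  have e1: "(1-2*t)*x + (2*t)*((x+y)/2) = (1-t)*x+t*y" by (simp add: field_simps)
  have "f ((1-2*t)*x + (2*t)*((x+y)/2)) \<le> (1-2*t)*f x + (2*t)*f ((x+y)/2)"
    using conv1[OF assms(1) assms(2) mS, of "2*t"] assms by simp
  then show "2*t*((f x + f y)/2 - f((x+y)/2)) \<le> (1-t)*f x + t*f y - f((1-t)*x+t*y)"
  proof -
    assume H: "f ((1-2*t)*x + (2*t)*((x+y)/2)) \<le> (1-2*t)*f x + (2*t)*f ((x+y)/2)"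
    have q1: "2*t*((f x + f y)/2 - f((x+y)/2)) = t*f x + t*f y - 2*t*f((x+y)/2)"
      by (simp add: algebra_simps)
    have q2: "(1-t)*f x = f x - t*f x" "(1-2*t)*f x = f x - 2*(t*f x)"
      by (simp_all add: algebra_simps)
    show ?thesis using H unfolding e1 q1 q2 by linarith
  qed
  define w where "w = 1/(2*(1-t))"
  define \<beta> where "\<beta> = 1 - w"
  have nz: "1 - t \<noteq> 0" using assms by simp
  have hw: "w*(1-t) = 1/2" "2*(1-t)*w = 1" unfolding w_def using nz by simp_all
  have w01: "0 \<le> w" "w \<le> 1" unfolding w_def using assms by (simp_all add: field_simps)
  have b0: "0 \<le> \<beta>" "\<beta> \<le> 1" using w01 unfolding \<beta>_def by auto
  have e2: "(1-\<beta>)*((1-t)*x+t*y) + \<beta>*y = (x+y)/2"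
  proof -
    have "(1-\<beta>)*((1-t)*x+t*y) + \<beta>*y = (w*(1-t))*x + y - (w*(1-t))*y"
      unfolding \<beta>_def by (simp add: algebra_simps)
    then show ?thesis unfolding hw by simp
  qed
  have "f ((1-\<beta>)*((1-t)*x+t*y) + \<beta>*y) \<le> (1-\<beta>)*f ((1-t)*x+t*y) + \<beta>*f y"
    using conv1[OF assms(1) pS assms(3) b0] .
  then have "f ((x+y)/2) \<le> (1-\<beta>)*f ((1-t)*x+t*y) + \<beta>*f y" unfolding e2 .
  then have "2*(1-t)*f ((x+y)/2) \<le> 2*(1-t)*((1-\<beta>)*f ((1-t)*x+t*y) + \<beta>*f y)"
    using assms by (intro mult_left_mono) auto
  also have "\<dots> = (2*(1-t)*w)*f ((1-t)*x+t*y) + 2*(1-t)*f y - (2*(1-t)*w)* f y"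
    unfolding \<beta>_def by (simp add: algebra_simps)
  also have "\<dots> = f ((1-t)*x+t*y) + 2*(1-t)*f y - f y" unfolding hw by simp
  finally have F: "2*(1-t)*f ((x+y)/2) \<le> f ((1-t)*x+t*y) + 2*(1-t)*f y - f y" .
  have q0: "2*(1-t)*((f x + f y)/2 - f((x+y)/2)) = f x - t*f x + f y - t * f y - 2*(1-t)*f ((x+y)/2)"
    by (simp add: field_simps)
  have q: "(1-t)*f x = f x - t*f x" "2*(1-t)*f y = 2*f y - 2*(t*f y)" by (simp_all add: algebra_simps)
  show "(1-t)*f x + t*f y - f((1-t)*x+t*y) \<le> 2*(1-t)*((f x + f y)/2 - f((x+y)/2))"
    using F unfolding q0 q by linarith
qed

lemma refine:
  fixes f :: "real \<Rightarrow> real"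
  assumes "convex_on S f" "x \<in> S" "y \<in> S" "0 \<le> t" "t \<le> 1"
  shows "2*min t (1-t)*((f x + f y)/2 - f((x+y)/2)) \<le> (1-t)*f x + t*f y - f((1-t)*x+t*y)"
    and "(1-t)*f x + t*f y - f((1-t)*x+t*y) \<le> 2*max t (1-t)*((f x + f y)/2 - f((x+y)/2))"
proof -
  have "(2*min t (1-t)*((f x + f y)/2 - f((x+y)/2)) \<le> (1-t)*f x + t*f y - f((1-t)*x+t*y))
     \<and> ((1-t)*f x + t*f y - f((1-t)*x+t*y) \<le> 2*max t (1-t)*((f x + f y)/2 - f((x+y)/2)))"
  proof (cases "t \<le> 1/2")
    case True
    then show ?thesis using refine_half[OF assms(1-4) True] by (simp add: min_def max_def)
  next
    case False
    have h: "1 - t \<le> 1/2" "0 \<le> 1-t" using False assms by auto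
    have e: "(1-(1-t))*y + (1-t)*x = (1-t)*x+t*y" "(y+x)/2 = (x+y)/2" by (simp_all add: algebra_simps)
    show ?thesis using refine_half[OF assms(1) assms(3) assms(2) h(2) h(1)] False
      unfolding e by (simp add: min_def max_def algebra_simps)
  qed
  then show "2*min t (1-t)*((f x + f y)/2 - f((x+y)/2)) \<le> (1-t)*f x + t*f y - f((1-t)*x+t*y)"
    and "(1-t)*f x + t*f y - f((1-t)*x+t*y) \<le> 2*max t (1-t)*((f x + f y)/2 - f((x+y)/2))"
    by auto
qed

lemma convex_integrable01:
  fixes G :: "real \<Rightarrow> real"
  assumes "convex_on {0..1} G"
  shows "G integrable_on {0..1}"
proof -
  have cO: "convex_on {0<..<1} G" by (rule convex_on_subset[OF assms]) auto
  have cont: "continuous_on {0<..<1} G" using convex_on_continuous[OF _ cO] by simp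
  have meas: "G \<in> borel_measurable (lebesgue_on {0<..<1})"
    by (rule continuous_imp_measurable_on_sets_lebesgue[OF cont]) auto
  define C where "C = 2*\<bar>G 0\<bar> + 2*\<bar>G 1\<bar> + 2*\<bar>G (1/2)\<bar>"
  have bd: "\<bar>G t\<bar> \<le> C" if t: "t \<in> {0..1}" for t
  proof -
    have "G ((1-t)*0 + t*1) \<le> (1-t)*G 0 + t*G 1" using conv1[OF assms, of 0 1 t] t by auto
    then have up: "G t \<le> (1-t)*G 0 + t*G 1" by simp
    have "(1-t)*\<bar>G 0\<bar> + t*\<bar>G 1\<bar> \<le> \<bar>G 0\<bar> + \<bar>G 1\<bar>"
      using t by (intro add_mono) (auto intro: mult_left_le_one_le)
    moreover have "(1-t)*G 0 \<le> (1-t)*\<bar>G 0\<bar>" "t*G 1 \<le> t*\<bar>G 1\<bar>" using t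
      by (auto intro: mult_left_mono)
    ultimately have up2: "G t \<le> \<bar>G 0\<bar> + \<bar>G 1\<bar>" using up by linarith
    have t2: "1 - t \<in> {0..1}" using t by auto
    have up3: "G (1-t) \<le> \<bar>G 0\<bar> + \<bar>G 1\<bar>"
    proof -
      have "(1-(1-t))*\<bar>G 0\<bar> + (1-t)*\<bar>G 1\<bar> \<le> \<bar>G 0\<bar> + \<bar>G 1\<bar>"
        using t by (intro add_mono) (auto intro: mult_left_le_one_le)
      moreover have "G ((1-(1-t))*0 + (1-t)*1) \<le> (1-(1-t))*G 0 + (1-t)*G 1"
        using conv1[OF assms, of 0 1 "1-t"] t by auto
      moreover have "(1-(1-t))*G 0 \<le> (1-(1-t))*\<bar>G 0\<bar>" "(1-t)*G 1 \<le> (1-t)*\<bar>G 1\<bar>" using t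
        by (auto intro: mult_left_mono)
      ultimately show ?thesis by simp
    qed
    have Hc: "G ((1-1/2)*t + (1/2)*(1-t)) \<le> (1-1/2)*G t + (1/2)*G (1-t)"
      using conv1[OF assms t t2, of "1/2"] by simp
    have eq: "(1-1/2)*t + (1/2)*(1-t) = (1/2::real)" by (simp add: field_simps)
    have "G (1/2) \<le> (1-1/2)*G t + (1/2)*G (1-t)" using Hc unfolding eq .
    then have "G (1/2) \<le> G t / 2 + G (1-t) / 2" by simp
    then show ?thesis using up2 up3 unfolding C_def by linarith
  qed
  have "G integrable_on {0<..<1}"
    by (rule measurable_bounded_by_integrable_imp_integrable_real[OF meas, of "\<lambda>_. C"])
      (use bd in \<open>auto simp: integrable_on_open_interval_real\<close>)
  then show ?thesis by (simp add: integrable_on_open_interval_real)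
qed

lemma nabla_in:
  fixes f :: "real \<Rightarrow> real"
  assumes "convex_on J f" "a \<in> J" "b \<in> J" "0 \<le> \<mu>" "\<mu> \<le> 1"
  shows "nabla a \<mu> b \<in> J"
  using convpt[OF assms] unfolding nabla_def .

lemma aff_int:
  fixes f :: "real \<Rightarrow> real"
  assumes cv: "convex_on J f" and ab: "a \<in> J" "b \<in> J"
    and rng: "\<And>l. l \<in> {0..1} \<Longrightarrow> 0 \<le> c + d*l \<and> c + d*l \<le> 1"
  shows "(\<lambda>l. f (nabla a (c + d*l) b)) integrable_on {0..1}"
proof (rule convex_integrable01, rule convex_onI)
  fix t u v :: real
  assume t: "0 < t" "t < 1" and u: "u \<in> {0..1}" and v: "v \<in> {0..1}"
  have uJ: "nabla a (c + d * u) b \<in> J" using nabla_in[OF cv ab] rng[OF u] by auto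
  have vJ: "nabla a (c + d * v) b \<in> J" using nabla_in[OF cv ab] rng[OF v] by auto
  have e: "nabla a (c + d*((1 - t) *\<^sub>R u + t *\<^sub>R v)) b
      = (1-t)*nabla a (c + d * u) b + t*nabla a (c + d * v) b"
    by (simp add: nabla_def algebra_simps)
  show "f (nabla a (c + d*((1 - t) *\<^sub>R u + t *\<^sub>R v)) b)
      \<le> (1 - t) * f (nabla a (c + d * u) b) + t * f (nabla a (c + d * v) b)"
    unfolding e using conv1[OF cv uJ vJ] t by simp
qed simp

theorem corollary2p21:
  fixes J :: "real set" and f :: "real \<Rightarrow> real" and a b \<nu> :: real
  assumes "is_interval J"
    and "convex_on J f"
    and "a \<in> J" and "b \<in> J"
    and "0 \<le> \<nu>" and "\<nu> \<le> 1"
  defines "r \<equiv> min \<nu> (1 - \<nu>)" and "R \<equiv> max \<nu> (1 - \<nu>)"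
  shows "2 * (r * Phi f a b \<nu> + r_tilde \<nu> * Delta f a b)
           \<le> nabla (f a) \<nu> (f b) - f (nabla a \<nu> b)
         \<and> nabla (f a) \<nu> (f b) - f (nabla a \<nu> b)
           \<le> 2 * (R * Phi f a b \<nu> + R_tilde \<nu> * Delta f a b)"
proof -
  note cv = assms(2) and ab = assms(3,4) and nu = assms(5,6)
  define D where "D = nabla (f a) \<nu> (f b) - f (nabla a \<nu> b)"
  define \<Delta> where "\<Delta> = Delta f a b"
  define h where "h = (\<lambda>t. (f (nabla a (\<nu> * t) b) + f (nabla b ((1 - \<nu>) * t) a)) / 2
      - f (nabla a ((1 + t * (2 * \<nu> - 1)) / 2) b))"
  define k where "k = (\<lambda>t. (1 - \<nu>) * r1 \<nu> t + \<nu> * r2 \<nu> t)"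
  define K where "K = (\<lambda>t. (1 - \<nu>) * R1 \<nu> t + \<nu> * R2 \<nu> t)"
  have PhiE: "Phi f a b \<nu> = integral {0..1} h" unfolding Phi_def h_def ..
  have rE: "r_tilde \<nu> = integral {0..1} k" unfolding r_tilde_def k_def ..
  have RE: "R_tilde \<nu> = integral {0..1} K" unfolding R_tilde_def K_def ..
  have pw: "2*r*h l + 2*k l*\<Delta> \<le> D \<and> D \<le> 2*R*h l + 2*K l*\<Delta>" if l: "l \<in> {0..1}" for l
  proof -
    define X where "X = nabla a (\<nu> * l) b"
    define Y where "Y = nabla b ((1 - \<nu>) * l) a"
    have l01: "0 \<le> l" "l \<le> 1" using l by auto
    have p1: "0 \<le> \<nu> * l" "\<nu> * l \<le> 1" using nu l01 by (auto intro: mult_le_one)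
    have p2: "0 \<le> (1-\<nu>) * l" "(1-\<nu>) * l \<le> 1" using nu l01 by (auto intro: mult_le_one)
    have XJ: "X \<in> J" unfolding X_def using nabla_in[OF cv ab p1] .
    have YJ: "Y \<in> J" unfolding Y_def using nabla_in[OF cv ab(2) ab(1) p2] .
    note A = refine[OF cv XJ YJ nu]
    have eA1: "(1-\<nu>)*X + \<nu>*Y = nabla a \<nu> b" unfolding X_def Y_def nabla_def
      by (simp add: algebra_simps)
    have eA2: "(X+Y)/2 = nabla a ((1 + l * (2 * \<nu> - 1)) / 2) b" unfolding X_def Y_def nabla_def
      by (simp add: field_simps)
    have hA: "h l = (f X + f Y)/2 - f((X+Y)/2)" unfolding h_def X_def Y_def eA2[unfolded X_def Y_def] ..
    note B = refine[OF cv ab p1]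
    have eB: "(1 - \<nu> * l) * a + \<nu> * l * b = X" unfolding X_def nabla_def by simp
    have p3: "0 \<le> 1 - (1-\<nu>) * l" "1 - (1-\<nu>) * l \<le> 1" using p2 by auto
    note C = refine[OF cv ab p3]
    have eC: "(1 - (1 - (1-\<nu>) * l)) * a + (1 - (1-\<nu>) * l) * b = Y" unfolding Y_def nabla_def
      by (simp add: algebra_simps)
    have mC: "min (1 - (1-\<nu>) * l) (1 - (1 - (1-\<nu>) * l)) = r2 \<nu> l"
      unfolding r2_def by (simp add: min_def)
    have MC: "max (1 - (1-\<nu>) * l) (1 - (1 - (1-\<nu>) * l)) = R2 \<nu> l"
      unfolding R2_def by (simp add: max_def)
    have mB: "min (\<nu> * l) (1 - \<nu> * l) = r1 \<nu> l" unfolding r1_def ..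
    have MB: "max (\<nu> * l) (1 - \<nu> * l) = R1 \<nu> l" unfolding R1_def ..
    have dE: "\<Delta> = (f a + f b) / 2 - f ((a + b) / 2)" unfolding \<Delta>_def Delta_def ..
    define E0 where "E0 = (1-\<nu>)*f X + \<nu>*f Y - f((1-\<nu>)*X + \<nu>*Y)"
    define E1 where "E1 = (1 - \<nu> * l) * f a + \<nu> * l * f b - f X"
    define E2 where "E2 = (1 - (1 - (1-\<nu>) * l)) * f a + (1 - (1-\<nu>) * l) * f b - f Y"
    have Dsplit: "D = E0 + (1-\<nu>)*E1 + \<nu>*E2"
      unfolding D_def E0_def E1_def E2_def eA1 by (simp add: nabla_def algebra_simps)
    have A1: "2*r*h l \<le> E0" "E0 \<le> 2*R*h l"
      using A unfolding E0_def hA r_def R_def by simp_all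
    have B1: "2*r1 \<nu> l*\<Delta> \<le> E1" "E1 \<le> 2*R1 \<nu> l*\<Delta>"
      using B unfolding E1_def eB mB MB dE by simp_all
    have C1: "2*r2 \<nu> l*\<Delta> \<le> E2" "E2 \<le> 2*R2 \<nu> l*\<Delta>"
      using C unfolding E2_def eC mC MC dE by simp_all
    have nu': "0 \<le> 1 - \<nu>" using nu by simp
    have B2: "(1-\<nu>)*(2*r1 \<nu> l*\<Delta>) \<le> (1-\<nu>)*E1" "(1-\<nu>)*E1 \<le> (1-\<nu>)*(2*R1 \<nu> l*\<Delta>)"
      using B1 nu' by (simp_all add: mult_left_mono)
    have C2: "\<nu>*(2*r2 \<nu> l*\<Delta>) \<le> \<nu>*E2" "\<nu>*E2 \<le> \<nu>*(2*R2 \<nu> l*\<Delta>)"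
      using C1 nu by (simp_all add: mult_left_mono)
    have kE: "2*k l*\<Delta> = (1-\<nu>)*(2*r1 \<nu> l*\<Delta>) + \<nu>*(2*r2 \<nu> l*\<Delta>)"
      unfolding k_def by (simp add: algebra_simps)
    have KE: "2*K l*\<Delta> = (1-\<nu>)*(2*R1 \<nu> l*\<Delta>) + \<nu>*(2*R2 \<nu> l*\<Delta>)"
      unfolding K_def by (simp add: algebra_simps)
    show ?thesis unfolding Dsplit kE KE using A1 B2 C2 by linarith
  qed
  have hint: "h integrable_on {0..1}"
  proof -
    have i1: "(\<lambda>t. f (nabla a (0 + \<nu> * t) b)) integrable_on {0..1}"
      by (rule aff_int[OF cv ab]) (use nu in \<open>auto intro: mult_le_one\<close>)
    have i2: "(\<lambda>t. f (nabla a (1 + (\<nu> - 1) * t) b)) integrable_on {0..1}"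
    proof (rule aff_int[OF cv ab])
      fix l :: real assume "l \<in> {0..1}"
      then have "0 \<le> (1-\<nu>)*l" "(1-\<nu>)*l \<le> 1" using nu by (auto intro: mult_le_one)
      then show "0 \<le> 1 + (\<nu> - 1) * l \<and> 1 + (\<nu> - 1) * l \<le> 1" by (simp add: algebra_simps)
    qed
    have i3: "(\<lambda>t. f (nabla a (1/2 + ((2*\<nu>-1)/2) * t) b)) integrable_on {0..1}"
    proof (rule aff_int[OF cv ab])
      fix l :: real assume l: "l \<in> {0..1}"
      have hh: "0 \<le> \<nu>*l" "\<nu>*l \<le> 1" "0 \<le> (1-\<nu>)*l" "(1-\<nu>)*l \<le> 1"
        using nu l by (auto intro: mult_le_one)
      have eq1: "1/2 + ((2*\<nu>-1)/2) * l = 1/2 + \<nu>*l - l/2" by (simp add: field_simps)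
      have eq2: "(1-\<nu>)*l = l - \<nu>*l" by (simp add: algebra_simps)
      show "0 \<le> 1/2 + ((2*\<nu>-1)/2) * l \<and> 1/2 + ((2*\<nu>-1)/2) * l \<le> 1"
        unfolding eq1 using hh unfolding eq2 by linarith
    qed
    have e2: "nabla b ((1 - \<nu>) * t) a = nabla a (1 + (\<nu> - 1) * t) b" for t
      unfolding nabla_def by (simp add: algebra_simps)
    have e3: "(1 + t * (2 * \<nu> - 1)) / 2 = 1/2 + ((2*\<nu>-1)/2) * t" for t
      by (simp add: field_simps)
    have "(\<lambda>t. (f (nabla a (0 + \<nu> * t) b) + f (nabla a (1 + (\<nu> - 1) * t) b)) / 2
        - f (nabla a (1/2 + ((2*\<nu>-1)/2) * t) b)) integrable_on {0..1}"
      by (intro integrable_diff integrable_add integrable_on_divide i1 i2 i3)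
    then show ?thesis unfolding h_def e2 e3 by simp
  qed
  have cr1: "continuous_on {0..1} (r1 \<nu>)" unfolding r1_def by (intro continuous_intros)
  have cr2: "continuous_on {0..1} (r2 \<nu>)" unfolding r2_def by (intro continuous_intros)
  have cR1: "continuous_on {0..1} (R1 \<nu>)" unfolding R1_def by (intro continuous_intros)
  have cR2: "continuous_on {0..1} (R2 \<nu>)" unfolding R2_def by (intro continuous_intros)
  have kint: "k integrable_on {0..1}" unfolding k_def
    by (intro integrable_continuous_real continuous_intros cr1 cr2)
  have Kint: "K integrable_on {0..1}" unfolding K_def
    by (intro integrable_continuous_real continuous_intros cR1 cR2)
  have L: "((\<lambda>l. 2*r*h l + 2*k l*\<Delta>) has_integral (2*(r*Phi f a b \<nu> + r_tilde \<nu> * \<Delta>))) {0..1}"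
  proof -
    have "((\<lambda>l. 2*r*h l + 2*k l*\<Delta>) has_integral (2*r*integral {0..1} h + 2*integral {0..1} k*\<Delta>)) {0..1}"
      by (intro has_integral_add has_integral_mult_right has_integral_mult_left
          integrable_integral hint kint)
    then show ?thesis unfolding PhiE rE by (simp add: algebra_simps)
  qed
  have U: "((\<lambda>l. 2*R*h l + 2*K l*\<Delta>) has_integral (2*(R*Phi f a b \<nu> + R_tilde \<nu> * \<Delta>))) {0..1}"
  proof -
    have "((\<lambda>l. 2*R*h l + 2*K l*\<Delta>) has_integral (2*R*integral {0..1} h + 2*integral {0..1} K*\<Delta>)) {0..1}"
      by (intro has_integral_add has_integral_mult_right has_integral_mult_left
          integrable_integral hint Kint)
    then show ?thesis unfolding PhiE RE by (simp add: algebra_simps)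
  qed
  have Dc: "((\<lambda>l::real. D) has_integral D) {0..1}"
    using has_integral_const_real[of D 0 1] by simp
  have 1: "2*(r*Phi f a b \<nu> + r_tilde \<nu> * \<Delta>) \<le> D"
    by (rule has_integral_le[OF L Dc]) (use pw in auto)
  have 2: "D \<le> 2*(R*Phi f a b \<nu> + R_tilde \<nu> * \<Delta>)"
    by (rule has_integral_le[OF Dc U]) (use pw in auto)
  show ?thesis using 1 2 unfolding D_def \<Delta>_def by simp
qed

end
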